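(* Let $Q\subset\mathbb{R}^2$ be a convex polygon with $n\ge 4$ vertices, no four of which lie on a common circle. Consider all circles passing through three vertices of $Q$. Let $s_+,t_+,u_+$ be the numbers of full circles that are neighboring, disjoint and intermediate, respectively, and let $s_-,t_-,u_-$ be the numbers of empty circles that are neighboring, disjoint and intermediate, respectively. Then $$s_+-t_+=s_--t_-=2,\qquad s_++t_++u_+=s_-+t_-+u_-=n-2.$$
   Context: A circle through three vertices of $Q$ is called empty if all remaining vertices of $Q$ lie strictly outside it, and full if all remaining vertices of $Q$ lie strictly inside it. Such a circle is called neighboring if its three vertices are consecutive vertices of $Q$; disjoint if no two of its three vertices are adjacent vertices of $Q$; and intermediate in all other cases. *)

theory Defs
  imports "HOL-Analysis.Analysis"
begin

text \<open>Points of the plane are pairs of reals (Euclidean metric via dist).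
  A polygon with n vertices is given by p 0, ..., p (n-1), listed in cyclic
  boundary order; indices are taken modulo n.\<close>

definition orient :: "real \<times> real \<Rightarrow> real \<times> real \<Rightarrow> real \<times> real \<Rightarrow> real" where
  "orient a b c = (fst b - fst a) * (snd c - snd a) - (snd b - snd a) * (fst c - fst a)"

definition convex_polygon :: "nat \<Rightarrow> (nat \<Rightarrow> real \<times> real) \<Rightarrow> bool" where
  "convex_polygon n p \<longleftrightarrow> n \<ge> 3 \<and>
     ((\<forall>i<n. \<forall>j<n. j \<noteq> i \<and> j \<noteq> Suc i mod n \<longrightarrow> orient (p i) (p (Suc i mod n)) (p j) > 0) \<or>
      (\<forall>i<n. \<forall>j<n. j \<noteq> i \<and> j \<noteq> Suc i mod n \<longrightarrow> orient (p i) (p (Suc i mod n)) (p j) < 0))"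

definition on_common_circle :: "(real \<times> real) set \<Rightarrow> bool" where
  "on_common_circle S \<longleftrightarrow> (\<exists>c r. r > 0 \<and> (\<forall>x\<in>S. dist c x = r))"

definition no_four_concyclic :: "nat \<Rightarrow> (nat \<Rightarrow> real \<times> real) \<Rightarrow> bool" where
  "no_four_concyclic n p \<longleftrightarrow>
     (\<forall>i j k l. i < n \<and> j < n \<and> k < n \<and> l < n \<and> distinct [i, j, k, l] \<longrightarrow>
        \<not> on_common_circle {p i, p j, p k, p l})"

text \<open>Triples of vertex indices (3-element subsets of {0..<n}); each determines
  exactly one circle through three vertices, and distinct triples give distinct
  circles because no four vertices are concyclic.\<close>
definition triples :: "nat \<Rightarrow> nat set set" where
  "triples n = {T. T \<subseteq> {0..<n} \<and> card T = 3}"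

definition full_circle :: "nat \<Rightarrow> (nat \<Rightarrow> real \<times> real) \<Rightarrow> nat set \<Rightarrow> bool" where
  "full_circle n p T \<longleftrightarrow> (\<exists>c r. (\<forall>i\<in>T. dist c (p i) = r) \<and>
      (\<forall>m\<in>{0..<n} - T. dist c (p m) < r))"

definition empty_circle :: "nat \<Rightarrow> (nat \<Rightarrow> real \<times> real) \<Rightarrow> nat set \<Rightarrow> bool" where
  "empty_circle n p T \<longleftrightarrow> (\<exists>c r. (\<forall>i\<in>T. dist c (p i) = r) \<and>
      (\<forall>m\<in>{0..<n} - T. dist c (p m) > r))"

definition adjacent :: "nat \<Rightarrow> nat \<Rightarrow> nat \<Rightarrow> bool" where
  "adjacent n i j \<longleftrightarrow> j = Suc i mod n \<or> i = Suc j mod n"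

definition neighboring :: "nat \<Rightarrow> nat set \<Rightarrow> bool" where
  "neighboring n T \<longleftrightarrow> (\<exists>i<n. T = {i, Suc i mod n, Suc (Suc i) mod n})"

definition disjoint_triple :: "nat \<Rightarrow> nat set \<Rightarrow> bool" where
  "disjoint_triple n T \<longleftrightarrow> (\<forall>i\<in>T. \<forall>j\<in>T. \<not> adjacent n i j)"

definition intermediate :: "nat \<Rightarrow> nat set \<Rightarrow> bool" where
  "intermediate n T \<longleftrightarrow> \<not> neighboring n T \<and> \<not> disjoint_triple n T"

end

theory Submission imports Defs begin

definition cyc :: "nat \<Rightarrow> nat \<Rightarrow> nat \<Rightarrow> bool" where
  "cyc x y w \<longleftrightarrow> (x < y \<and> y < w) \<or> (y < w \<and> w < x) \<or> (w < x \<and> x < y)"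

lemma cover: "distinct [a,b,c,m] \<Longrightarrow> cyc a b m \<noteq> cyc a b c \<or> cyc b c m \<noteq> cyc b c a \<or> cyc c a m \<noteq> cyc c a b"
  by (simp add: cyc_def) presburger

lemma disj: "distinct [a,b,c,m] \<Longrightarrow> \<not> (cyc a b m \<noteq> cyc a b c \<and> cyc b c m \<noteq> cyc b c a)"
  by (simp add: cyc_def) presburger

lemma crossc: "distinct [a,b,x,y] \<Longrightarrow> cyc a b x \<Longrightarrow> \<not> cyc a b y \<Longrightarrow> cyc b x y \<and> \<not> cyc a x y"
  by (simp add: cyc_def) presburger

lemma orient_cyc: "orient a b c = orient b c a" unfolding orient_def by (simp add: algebra_simps)
lemma orient_swap: "orient a c b = - orient a b c" unfolding orient_def by (simp add: algebra_simps)

definition aff :: "real \<Rightarrow> real \<Rightarrow> real \<Rightarrow> real \<times> real \<Rightarrow> real" where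
  "aff \<alpha> \<beta> \<gamma> x = \<alpha> * fst x + \<beta> * snd x + \<gamma>"

lemma four_id: "orient B X Y * aff u v w A - orient A X Y * aff u v w B + orient A B Y * aff u v w X - orient A B X * aff u v w Y = 0"
  unfolding orient_def aff_def by (simp add: algebra_simps)

lemma turn_id: "orient P X Y * orient P U W + orient P Y W * orient P U X + orient P W X * orient P U Y = 0"
  unfolding orient_def by (simp add: algebra_simps)

lemma cyc_swap: "distinct [x,y,w] \<Longrightarrow> cyc x w y \<longleftrightarrow> \<not> cyc x y w"
  by (simp add: cyc_def) presburger

lemma aff_diff: "aff u v w x - aff u' v' w' x = aff (u-u') (v-v') (w-w') x"
  by (simp add: aff_def algebra_simps)

lemma twoside: assumes "aff u v w P = 0" "aff u v w Q = 0"
  shows "orient P Q Y * aff u v w X = orient P Q X * aff u v w Y"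
  using four_id[where A=P and B=Q and X=X and Y=Y and u=u and v=v and w=w] assms by simp

locale cvx =
  fixes q :: "nat \<Rightarrow> real \<times> real" and z :: "nat \<Rightarrow> real" and N :: "nat set" and \<sigma> :: real
  assumes sig: "\<sigma> = 1 \<or> \<sigma> = -1"
    and ori: "\<And>i j k. i \<in> N \<Longrightarrow> j \<in> N \<Longrightarrow> k \<in> N \<Longrightarrow> i < j \<Longrightarrow> j < k \<Longrightarrow> \<sigma> * orient (q i) (q j) (q k) > 0"
    and gen: "\<And>i j k l \<alpha> \<beta> \<gamma>. i\<in>N \<Longrightarrow> j\<in>N \<Longrightarrow> k\<in>N \<Longrightarrow> l\<in>N \<Longrightarrow> distinct [i,j,k,l] \<Longrightarrow>
       aff \<alpha> \<beta> \<gamma> (q i) = z i \<Longrightarrow> aff \<alpha> \<beta> \<gamma> (q j) = z j \<Longrightarrow> aff \<alpha> \<beta> \<gamma> (q k) = z k \<Longrightarrow> aff \<alpha> \<beta> \<gamma> (q l) = z l \<Longrightarrow> False"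
    and fin: "finite N"
begin

definition orr :: "nat \<Rightarrow> nat \<Rightarrow> nat \<Rightarrow> real" where
  "orr x y w = \<sigma> * orient (q x) (q y) (q w)"

lemma orr_cyc: "orr x y w = orr y w x" unfolding orr_def orient_def by (simp add: algebra_simps)
lemma orr_swap: "orr x w y = - orr x y w" unfolding orr_def orient_def by (simp add: algebra_simps)

lemma ori_pos: assumes "x \<in> N" "y \<in> N" "w \<in> N" "cyc x y w" shows "orr x y w > 0"
proof -
  consider "x < y \<and> y < w" | "y < w \<and> w < x" | "w < x \<and> x < y" using assms(4) unfolding cyc_def by blast
  then show ?thesis
  proof cases
    case 1 then show ?thesis using ori assms unfolding orr_def by blast
  next
    case 2 then have "orr y w x > 0" using ori assms unfolding orr_def by blast
    then show ?thesis using orr_cyc[of x y w] by simp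
  next
    case 3 then have "orr w x y > 0" using ori assms unfolding orr_def by blast
    then show ?thesis using orr_cyc[of w x y] by simp
  qed
qed

lemma ori_neg: assumes "x \<in> N" "y \<in> N" "w \<in> N" "distinct [x,y,w]" "\<not> cyc x y w" shows "orr x y w < 0"
proof -
  have "cyc x w y" using cyc_swap[of x y w] assms(4,5) by simp
  then have "orr x w y > 0" using ori_pos assms by blast
  then show ?thesis using orr_swap by (metis neg_less_0_iff_less)
qed

lemma crossX:
  assumes N: "a\<in>N" "b\<in>N" "x\<in>N" "y\<in>N" and d: "distinct [a,b,x,y]" and c: "cyc a b x \<noteq> cyc a b y"
    and s: "aff u v w (q a) \<ge> 0" "aff u v w (q b) \<ge> 0" "aff u v w (q x) \<le> 0" "aff u v w (q y) \<le> 0"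
  shows "aff u v w (q x) = 0 \<and> aff u v w (q y) = 0"
proof -
  let ?da = "aff u v w (q a)" and ?db = "aff u v w (q b)" and ?dx = "aff u v w (q x)" and ?dy = "aff u v w (q y)"
  have id: "orr b x y * ?da - orr a x y * ?db + orr a b y * ?dx - orr a b x * ?dy = 0"
    using four_id[where A="q a" and B="q b" and X="q x" and Y="q y" and u=u and v=v and w=w] unfolding orr_def
    by (metis (no_types, lifting) mult.assoc mult_zero_right right_diff_distrib distrib_left)
  show ?thesis
  proof (cases "cyc a b x")
    case True
    then have nc: "\<not> cyc a b y" using c by simp
    have cc: "cyc b x y \<and> \<not> cyc a x y" using crossc[OF d True nc] .
    have o1: "orr b x y > 0" using ori_pos N cc by blast
    have o2: "orr a x y < 0" using ori_neg N cc d by auto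
    have o3: "orr a b y < 0" using ori_neg N nc d by auto
    have o4: "orr a b x > 0" using ori_pos N True by blast
    have t1: "orr b x y * ?da \<ge> 0" using o1 s by simp
    have t2: "orr a x y * ?db \<le> 0" using o2 s by (simp add: mult_nonpos_nonneg)
    have t3: "orr a b y * ?dx \<ge> 0" using o3 s by (simp add: mult_nonpos_nonpos)
    have t4: "orr a b x * ?dy \<le> 0" using o4 s by (simp add: mult_nonneg_nonpos)
    have "orr a b y * ?dx = 0" "orr a b x * ?dy = 0" using id t1 t2 t3 t4 by linarith+
    then show ?thesis using o3 o4 by simp
  next
    case False
    then have nc: "cyc a b y" using c by simp
    have d2: "distinct [a,b,y,x]" using d by auto
    have cc: "cyc b y x \<and> \<not> cyc a y x" using crossc[OF d2 nc False] .
    have cc2: "\<not> cyc b x y \<and> cyc a x y" using cc cyc_swap[of b x y] cyc_swap[of a x y] d by auto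
    have o1: "orr b x y < 0" using ori_neg N cc2 d by auto
    have o2: "orr a x y > 0" using ori_pos N cc2 by blast
    have o3: "orr a b y > 0" using ori_pos N nc by blast
    have o4: "orr a b x < 0" using ori_neg N False d by auto
    have t1: "orr b x y * ?da \<le> 0" using o1 s by (simp add: mult_nonpos_nonneg)
    have t2: "orr a x y * ?db \<ge> 0" using o2 s by simp
    have t3: "orr a b y * ?dx \<le> 0" using o3 s by (simp add: mult_nonneg_nonpos)
    have t4: "orr a b x * ?dy \<ge> 0" using o4 s by (simp add: mult_nonpos_nonpos)
    have "orr a b y * ?dx = 0" "orr a b x * ?dy = 0" using id t1 t2 t3 t4 by linarith+
    then show ?thesis using o3 o4 by simp
  qed
qed


definition lower :: "nat set \<Rightarrow> nat set \<Rightarrow> bool" where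
  "lower V T \<longleftrightarrow> T \<subseteq> V \<and> card T = 3 \<and>
     (\<exists>\<alpha> \<beta> \<gamma>. (\<forall>i\<in>T. aff \<alpha> \<beta> \<gamma> (q i) = z i) \<and> (\<forall>m\<in>V-T. aff \<alpha> \<beta> \<gamma> (q m) < z m))"

lemma lower_restrict: "lower V S \<Longrightarrow> S \<subseteq> W \<Longrightarrow> W \<subseteq> V \<Longrightarrow> lower W S"
  unfolding lower_def by blast

lemma third_elem: assumes "card T = 3" "i \<in> T" "j \<in> T" "i \<noteq> j"
  obtains x where "T = {i,j,x}" "x \<noteq> i" "x \<noteq> j"
proof -
  have fT: "finite T" using assms(1) by (metis card.infinite zero_neq_numeral)
  have "card (T - {i,j}) = 1" using assms fT by (simp add: card_Diff_subset)
  then obtain x where x: "T - {i,j} = {x}" by (meson card_1_singletonE)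
  then have "T = {i,j,x}" using assms(2,3) by blast
  moreover have "x \<noteq> i" "x \<noteq> j" using x by blast+
  ultimately show ?thesis using that by blast
qed

lemma edge_uniq:
  assumes V: "V \<subseteq> N" and L1: "lower V T1" and L2: "lower V T2"
    and ij: "i \<in> T1" "j \<in> T1" "i \<in> T2" "j \<in> T2" "i \<noteq> j"
    and side: "\<forall>m\<in>V-{i,j}. e * orient (q i) (q j) (q m) > 0"
  shows "T1 = T2"
proof -
  obtain x where x: "T1 = {i,j,x}" "x \<noteq> i" "x \<noteq> j" using third_elem L1 ij unfolding lower_def by metis
  obtain y where y: "T2 = {i,j,y}" "y \<noteq> i" "y \<noteq> j" using third_elem L2 ij unfolding lower_def by metis
  show ?thesis
  proof (rule ccontr)
    assume "T1 \<noteq> T2"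
    then have xy: "x \<noteq> y" using x y by blast
    obtain u1 v1 w1 where l1: "\<forall>k\<in>T1. aff u1 v1 w1 (q k) = z k" "\<forall>m\<in>V-T1. aff u1 v1 w1 (q m) < z m"
      using L1 unfolding lower_def by blast
    obtain u2 v2 w2 where l2: "\<forall>k\<in>T2. aff u2 v2 w2 (q k) = z k" "\<forall>m\<in>V-T2. aff u2 v2 w2 (q m) < z m"
      using L2 unfolding lower_def by blast
    define d where "d = (\<lambda>P. aff (u1-u2) (v1-v2) (w1-w2) P)"
    have dP: "\<And>P. d P = aff u1 v1 w1 P - aff u2 v2 w2 P" unfolding d_def by (simp add: aff_diff)
    have xV: "x \<in> V" "y \<in> V" using L1 L2 x y unfolding lower_def by auto
    have di: "d (q i) = 0" "d (q j) = 0" using l1 l2 ij dP by auto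
    have dx: "d (q x) > 0" using l1 l2 x y xy xV dP by auto
    have dy: "d (q y) < 0" using l1 l2 x y xy xV dP by auto
    have tw: "orient (q i) (q j) (q y) * d (q x) = orient (q i) (q j) (q x) * d (q y)"
      using twoside[of "u1-u2" "v1-v2" "w1-w2" "q i" "q j"] di unfolding d_def by blast
    have ex: "e * orient (q i) (q j) (q x) > 0" "e * orient (q i) (q j) (q y) > 0"
      using side x y xV by auto
    have "(e * orient (q i) (q j) (q y)) * d (q x) > 0" using ex dx by simp
    moreover have "(e * orient (q i) (q j) (q x)) * d (q y) < 0" using ex dy by (simp add: mult_pos_neg)
    ultimately show False using tw by (metis mult.assoc less_asym)
  qed
qed

lemma aff_lin: "aff (a + t*a') (b + t*b') (c + t*c') x = aff a b c x + t * aff a' b' c' x"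
  by (simp add: aff_def algebra_simps)

lemma orient_aff: "orient P Q x = aff (-(snd Q - snd P)) (fst Q - fst P)
     ((snd Q - snd P) * fst P - (fst Q - fst P) * snd P) x"
  by (simp add: aff_def orient_def algebra_simps)

lemma edge_ex:
  assumes V: "V \<subseteq> N" and ij: "i \<in> V" "j \<in> V" "i \<noteq> j" and ne: "V - {i,j} \<noteq> {}"
    and side: "\<forall>m\<in>V-{i,j}. e * orient (q i) (q j) (q m) > 0"
  shows "\<exists>T. lower V T \<and> i \<in> T \<and> j \<in> T"
proof -
  define P where "P = q i"
  define Q where "Q = q j"
  define d1 where "d1 = fst Q - fst P"
  define d2 where "d2 = snd Q - snd P"
  define D where "D = d1^2 + d2^2"
  have "P \<noteq> Q"
  proof
    assume "P = Q"
    obtain m where "m \<in> V - {i,j}" using ne by blast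
    then have "e * orient P Q (q m) > 0" using side P_def Q_def by blast
    then show False using \<open>P = Q\<close> by (simp add: orient_def)
  qed
  then have "d1 \<noteq> 0 \<or> d2 \<noteq> 0" unfolding d1_def d2_def by (auto simp: prod_eq_iff)
  then have Dpos: "D > 0" unfolding D_def by (simp add: sum_power2_gt_zero_iff)
  define a0 where "a0 = (z j - z i) * d1 / D"
  define b0 where "b0 = (z j - z i) * d2 / D"
  define c0 where "c0 = z i - a0 * fst P - b0 * snd P"
  have l0P: "aff a0 b0 c0 P = z i" unfolding aff_def c0_def by simp
  have l0Q: "aff a0 b0 c0 Q = z j"
  proof -
    have "aff a0 b0 c0 Q = z i + a0 * d1 + b0 * d2" unfolding aff_def c0_def d1_def d2_def by (simp add: algebra_simps)
    also have "\<dots> = z i + (z j - z i) * (d1^2 + d2^2) / D" unfolding a0_def b0_def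
      by (simp add: power2_eq_square add_divide_distrib diff_divide_distrib algebra_simps)
    also have "\<dots> = z j"
    proof -
      have "(z j - z i) * (d1^2 + d2^2) / D = z j - z i" using Dpos by (simp add: D_def[symmetric])
      then show ?thesis by simp
    qed
    finally show ?thesis .
  qed
  define h where "h = (\<lambda>x. e * orient P Q x)"
  define ga where "ga = e * (-(snd Q - snd P))"
  define gb where "gb = e * (fst Q - fst P)"
  define gc where "gc = e * ((snd Q - snd P) * fst P - (fst Q - fst P) * snd P)"
  have hq: "\<And>x. h x = aff ga gb gc x" unfolding h_def ga_def gb_def gc_def
    by (simp add: orient_aff aff_def algebra_simps)
  have hP: "h P = 0" "h Q = 0" unfolding h_def orient_def by simp_all
  have hpos: "\<And>m. m \<in> V - {i,j} \<Longrightarrow> h (q m) > 0" using side unfolding h_def P_def Q_def by blast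
  define tt where "tt = (\<lambda>m. (z m - aff a0 b0 c0 (q m)) / h (q m))"
  have finV: "finite V" using V fin finite_subset by blast
  define M where "M = Min (tt ` (V - {i,j}))"
  have "M \<in> tt ` (V - {i,j})" unfolding M_def using finV ne by (intro Min_in) auto
  then obtain m0 where m0: "m0 \<in> V - {i,j}" "tt m0 = M" by blast
  have Mle: "\<And>m. m \<in> V - {i,j} \<Longrightarrow> M \<le> tt m" unfolding M_def using finV by (intro Min_le) auto
  define A where "A = a0 + M * ga"
  define B where "B = b0 + M * gb"
  define C where "C = c0 + M * gc"
  have L: "\<And>x. aff A B C x = aff a0 b0 c0 x + M * h x" unfolding A_def B_def C_def using aff_lin hq by simp
  have Li: "aff A B C (q i) = z i" using L hP l0P P_def by simp
  have Lj: "aff A B C (q j) = z j" using L hP l0Q Q_def by simp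
  have Lm0: "aff A B C (q m0) = z m0"
  proof -
    have "h (q m0) > 0" using hpos m0 by blast
    then show ?thesis using L m0(2) unfolding tt_def by (simp add: field_simps)
  qed
  have Lm: "aff A B C (q m) < z m" if m: "m \<in> V - {i,j,m0}" for m
  proof -
    have mV: "m \<in> V - {i,j}" using m by blast
    have "tt m \<noteq> M"
    proof
      assume "tt m = M"
      then have "aff A B C (q m) = z m" using L hpos[OF mV] unfolding tt_def by (simp add: field_simps)
      then show False using gen[of i j m0 m A B C] Li Lj Lm0 m m0 ij V by auto
    qed
    then have "M < tt m" using Mle[OF mV] by simp
    then have "M * h (q m) < tt m * h (q m)" using hpos[OF mV] by simp
    also have "tt m * h (q m) = z m - aff a0 b0 c0 (q m)" unfolding tt_def using hpos[OF mV] by simp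
    finally show ?thesis using L by simp
  qed
  have c3: "card {i,j,m0} = 3" using m0 ij by auto
  have "lower V {i,j,m0}" unfolding lower_def using c3 ij m0 Li Lj Lm0 Lm by auto
  then show ?thesis by blast
qed

definition far :: "nat set \<Rightarrow> nat \<Rightarrow> nat \<Rightarrow> nat \<Rightarrow> nat set" where
  "far V a b c = {m \<in> V. m \<noteq> a \<and> m \<noteq> b \<and> cyc a b m \<noteq> cyc a b c}"

lemma lower_le: assumes "lower V S" obtains u v w where "\<forall>k\<in>S. aff u v w (q k) = z k"
   "\<forall>m\<in>V-S. aff u v w (q m) < z m" "\<forall>m\<in>V. aff u v w (q m) \<le> z m"
proof -
  obtain u v w where "\<forall>k\<in>S. aff u v w (q k) = z k" "\<forall>m\<in>V-S. aff u v w (q m) < z m"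
    using assms unfolding lower_def by blast
  moreover then have "\<forall>m\<in>V. aff u v w (q m) \<le> z m" by (metis DiffI less_eq_real_def order_refl)
  ultimately show ?thesis using that by blast
qed

lemma sub:
  assumes V: "V \<subseteq> N" and LT: "lower V T" and T: "T = {a,b,c}" "distinct [a,b,c]"
    and LS: "lower ({a,b} \<union> far V a b c) S"
  shows "lower V S"
proof -
  let ?W = "{a,b} \<union> far V a b c"
  have WV: "?W \<subseteq> V" using LT T unfolding lower_def far_def by auto
  obtain uT vT wT where lT: "\<forall>k\<in>T. aff uT vT wT (q k) = z k" "\<forall>m\<in>V-T. aff uT vT wT (q m) < z m"
      "\<forall>m\<in>V. aff uT vT wT (q m) \<le> z m" using lower_le[OF LT] by blast
  obtain uS vS wS where lS: "\<forall>k\<in>S. aff uS vS wS (q k) = z k" "\<forall>m\<in>?W-S. aff uS vS wS (q m) < z m"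
      "\<forall>m\<in>?W. aff uS vS wS (q m) \<le> z m" using lower_le[OF LS] by blast
  have SW: "S \<subseteq> ?W" "card S = 3" using LS unfolding lower_def by auto
  have "\<not> S \<subseteq> {a,b}"
  proof
    assume "S \<subseteq> {a,b}"
    then have "card S \<le> card {a,b}" by (simp add: card_mono)
    also have "\<dots> \<le> 2" by (simp add: card_insert_le_m1)
    finally show False using SW by simp
  qed
  then obtain s where s: "s \<in> S" "s \<noteq> a" "s \<noteq> b" by blast
  then have sF: "s \<in> far V a b c" using SW by blast
  then have sV: "s \<in> V" "cyc a b s \<noteq> cyc a b c" unfolding far_def by auto
  have sT: "s \<notin> T" using T s sV by auto
  define d where "d = (\<lambda>P. aff (uT-uS) (vT-vS) (wT-wS) P)"
  have dP: "\<And>P. d P = aff uT vT wT P - aff uS vS wS P" unfolding d_def by (simp add: aff_diff)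
  have da: "d (q a) \<ge> 0" "d (q b) \<ge> 0" using lT lS T dP by auto
  have ds: "d (q s) < 0" using lT(2) lS(1) s sV sT dP by auto
  have "aff uS vS wS (q m) < z m" if m: "m \<in> V - S" for m
  proof (cases "m \<in> ?W")
    case True then show ?thesis using lS m by blast
  next
    case False
    then have mm: "m \<noteq> a" "m \<noteq> b" "cyc a b m = cyc a b c" using m unfolding far_def by auto
    have "d (q m) > 0"
    proof (rule ccontr)
      assume "\<not> d (q m) > 0"
      then have "d (q m) \<le> 0" by simp
      moreover have "distinct [a,b,s,m]" using T s mm False sF by auto
      moreover have "a \<in> N" "b \<in> N" "s \<in> N" "m \<in> N" using WV sV m V by auto
      ultimately have "d (q s) = 0" using crossX[of a b s m "uT-uS" "vT-vS" "wT-wS"] da ds sV mm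
        unfolding d_def by auto
      then show False using ds by simp
    qed
    then show ?thesis using lT(3) m dP by fastforce
  qed
  then show ?thesis unfolding lower_def using SW WV lS(1) by blast
qed

lemma sup1:
  assumes V: "V \<subseteq> N" and LT: "lower V T" and T: "T = {a,b,c}" "distinct [a,b,c]"
    and LS: "lower V S" and x: "x \<in> S" "x \<in> far V a b c"
  shows "S \<subseteq> {a,b} \<union> far V a b c"
proof
  fix y assume y: "y \<in> S"
  show "y \<in> {a,b} \<union> far V a b c"
  proof (rule ccontr)
    assume ny: "y \<notin> {a,b} \<union> far V a b c"
    have yV: "y \<in> V" using LS y unfolding lower_def by auto
    then have yy: "y \<noteq> a" "y \<noteq> b" "cyc a b y = cyc a b c" using ny unfolding far_def by auto
    have xx: "x \<in> V" "x \<noteq> a" "x \<noteq> b" "cyc a b x \<noteq> cyc a b c" using x unfolding far_def by auto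
    have xT: "x \<notin> T" using T xx by auto
    obtain uT vT wT where lT: "\<forall>k\<in>T. aff uT vT wT (q k) = z k" "\<forall>m\<in>V-T. aff uT vT wT (q m) < z m"
      "\<forall>m\<in>V. aff uT vT wT (q m) \<le> z m" using lower_le[OF LT] by blast
    obtain uS vS wS where lS: "\<forall>k\<in>S. aff uS vS wS (q k) = z k" "\<forall>m\<in>V-S. aff uS vS wS (q m) < z m"
      "\<forall>m\<in>V. aff uS vS wS (q m) \<le> z m" using lower_le[OF LS] by blast
    define d where "d = (\<lambda>P. aff (uT-uS) (vT-vS) (wT-wS) P)"
    have dP: "\<And>P. d P = aff uT vT wT P - aff uS vS wS P" unfolding d_def by (simp add: aff_diff)
    have aV: "a \<in> V" "b \<in> V" using LT T unfolding lower_def by auto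
    have da: "d (q a) \<ge> 0" "d (q b) \<ge> 0" using lT lS T dP aV by auto
    have dx: "d (q x) < 0" using lT(2) lS(1) x xx xT dP by auto
    have dy: "d (q y) \<le> 0" using lT(3) lS(1) y yV dP by auto
    have "distinct [a,b,x,y]" using xx yy T by auto
    then have "d (q x) = 0" using crossX[of a b x y "uT-uS" "vT-vS" "wT-wS"] da dx dy xx yy yV aV V
      unfolding d_def by auto
    then show False using dx by simp
  qed
qed


lemma w12_aux: "F1 \<inter> F2 = {} \<Longrightarrow> a \<notin> F2 \<Longrightarrow> c \<notin> F1 \<Longrightarrow> a \<noteq> b \<Longrightarrow> a \<noteq> c \<Longrightarrow>
   ({a,b} \<union> F1) \<inter> ({b,c} \<union> F2) \<subseteq> {b}"
  by blast

lemma lower_fin: "finite V \<Longrightarrow> finite {S. lower V S}"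
  by (rule finite_subset[of _ "Pow V"]) (auto simp: lower_def)

lemma count: "V \<subseteq> N \<Longrightarrow> 2 \<le> card V \<Longrightarrow> card {S. lower V S} = card V - 2"
proof (induction "card V" arbitrary: V rule: less_induct)
  case (less V)
  have finV: "finite V" using less.prems fin finite_subset by blast
  show ?case
  proof (cases "card V = 2")
    case True
    have E0: "{S. lower V S} = {}"
    proof (rule ccontr)
      assume "{S. lower V S} \<noteq> {}"
      then obtain S where "lower V S" by blast
      then have "S \<subseteq> V" "card S = 3" unfolding lower_def by auto
      then have "card S \<le> card V" "card S = 3" using card_mono[OF finV, of S] by simp_all
      then show False using True by simp
    qed
    show ?thesis unfolding E0 using True by simp
  next
    case False
    then have c3: "card V \<ge> 3" using less.prems by simp
    define i where "i = Min V"
    define j where "j = Min (V - {i})"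
    have Vne: "V \<noteq> {}" using c3 by auto
    have iV: "i \<in> V" unfolding i_def using finV Vne by simp
    have "card (V - {i}) \<ge> 2" using c3 iV finV by simp
    then have V1ne: "V - {i} \<noteq> {}" by (metis card.empty not_numeral_le_zero)
    have jV: "j \<in> V - {i}" unfolding j_def using finV V1ne by (intro Min_in) auto
    have "card (V - {i,j}) = card V - card {i,j}" using iV jV finV by (intro card_Diff_subset) auto
    also have "card {i,j} = 2" using jV by auto
    finally have "card (V - {i,j}) \<ge> 1" using c3 by simp
    then have ne: "V - {i,j} \<noteq> {}" by (metis card.empty not_one_le_zero)
    have side: "\<forall>m\<in>V-{i,j}. \<sigma> * orient (q i) (q j) (q m) > 0"
    proof
      fix m assume m: "m \<in> V - {i,j}"
      have "i \<le> j" "i \<le> m" unfolding i_def using finV jV m by auto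
      moreover have "j \<le> m" unfolding j_def using finV m by auto
      ultimately have "i < j" "j < m" using m jV by auto
      then show "\<sigma> * orient (q i) (q j) (q m) > 0" using ori m iV jV less.prems by blast
    qed
    obtain T where LT: "lower V T" using edge_ex[OF less.prems(1) iV _ _ ne side] jV by blast
    then have "card T = 3" unfolding lower_def by simp
    then obtain a b c where T: "T = {a,b,c}" and dab: "a \<noteq> b" "b \<noteq> c" "a \<noteq> c" by (auto simp: card_3_iff)
    have TV: "a \<in> V" "b \<in> V" "c \<in> V" using LT T unfolding lower_def by auto
    have d3: "distinct [a,b,c]" "distinct [b,c,a]" "distinct [c,a,b]" using dab by auto
    have T2: "T = {b,c,a}" "T = {c,a,b}" using T by auto
    define F1 where "F1 = far V a b c"
    define F2 where "F2 = far V b c a"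
    define F3 where "F3 = far V c a b"
    define W1 where "W1 = {a,b} \<union> F1"
    define W2 where "W2 = {b,c} \<union> F2"
    define W3 where "W3 = {c,a} \<union> F3"
    have cover3: "V = T \<union> F1 \<union> F2 \<union> F3"
    proof
      show "V \<subseteq> T \<union> F1 \<union> F2 \<union> F3"
      proof
        fix m assume m: "m \<in> V"
        show "m \<in> T \<union> F1 \<union> F2 \<union> F3"
        proof (cases "m \<in> T")
          case False
          then have "distinct [a,b,c,m]" using T dab by auto
          from cover[OF this] have "m \<in> F1 \<or> m \<in> F2 \<or> m \<in> F3"
            using m \<open>distinct [a,b,c,m]\<close> unfolding F1_def F2_def F3_def far_def by simp
          then show ?thesis by blast
        qed simp
      qed
    next
      show "T \<union> F1 \<union> F2 \<union> F3 \<subseteq> V" using T TV unfolding F1_def F2_def F3_def far_def by auto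
    qed
    have F12: "F1 \<inter> F2 = {}" "F2 \<inter> F3 = {}" "F1 \<inter> F3 = {}"
    proof -
      show "F1 \<inter> F2 = {}"
      proof (rule ccontr)
        assume "F1 \<inter> F2 \<noteq> {}" then obtain m where m: "m \<in> F1" "m \<in> F2" by blast
        then have "distinct [a,b,c,m]" using dab unfolding F1_def F2_def far_def by auto
        from disj[OF this] show False using m unfolding F1_def F2_def far_def by blast
      qed
      show "F2 \<inter> F3 = {}"
      proof (rule ccontr)
        assume "F2 \<inter> F3 \<noteq> {}" then obtain m where m: "m \<in> F2" "m \<in> F3" by blast
        then have "distinct [b,c,a,m]" using dab unfolding F2_def F3_def far_def by auto
        from disj[OF this] show False using m unfolding F2_def F3_def far_def by blast
      qed
      show "F1 \<inter> F3 = {}"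
      proof (rule ccontr)
        assume "F1 \<inter> F3 \<noteq> {}" then obtain m where m: "m \<in> F1" "m \<in> F3" by blast
        then have "distinct [c,a,b,m]" using dab unfolding F1_def F3_def far_def by auto
        from disj[OF this] show False using m unfolding F1_def F3_def far_def by blast
      qed
    qed
    have FT: "T \<inter> F1 = {}" "T \<inter> F2 = {}" "T \<inter> F3 = {}" using T dab unfolding F1_def F2_def F3_def far_def by auto
    have finF: "finite F1" "finite F2" "finite F3" using cover3 finV by (metis finite_Un)+
    have cardV: "card V = 3 + card F1 + card F2 + card F3"
    proof -
      have fT: "finite T" using T by simp
      have e1: "card (T \<union> F1) = card T + card F1" using fT finF FT by (intro card_Un_disjoint) auto
      have e2: "card (T \<union> F1 \<union> F2) = card (T \<union> F1) + card F2"
        using fT finF FT F12 by (intro card_Un_disjoint) auto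
      have e3: "card (T \<union> F1 \<union> F2 \<union> F3) = card (T \<union> F1 \<union> F2) + card F3"
        using fT finF FT F12 by (intro card_Un_disjoint) auto
      show ?thesis using e1 e2 e3 cover3 \<open>card T = 3\<close> by simp
    qed
    have WV: "W1 \<subseteq> V" "W2 \<subseteq> V" "W3 \<subseteq> V" using cover3 TV unfolding W1_def W2_def W3_def by auto
    have cW: "card W1 = 2 + card F1" "card W2 = 2 + card F2" "card W3 = 2 + card F3"
      using FT T dab finF unfolding W1_def W2_def W3_def by (simp_all add: card_Un_disjoint)
    have cnot1: "c \<notin> W1" using FT(1) T dab unfolding W1_def by blast
    have cnot2: "a \<notin> W2" using FT(2) T dab unfolding W2_def by blast
    have cnot3: "b \<notin> W3" using FT(3) T dab unfolding W3_def by blast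
    note cnot = cnot1 cnot2 cnot3
    have IH: "card {S. lower Wk S} = card Fk" if "Wk \<subseteq> V" "x \<in> V" "x \<notin> Wk" "card Wk = 2 + card Fk" for Wk Fk x
    proof -
      have "Wk \<subset> V" using that by blast
      then have "card Wk < card V" using finV psubset_card_mono by blast
      then show ?thesis using less.hyps[of Wk] that less.prems by auto
    qed
    have L1: "card {S. lower W1 S} = card F1" using IH[OF WV(1) TV(3) cnot(1) cW(1)] .
    have L2: "card {S. lower W2 S} = card F2" using IH[OF WV(2) TV(1) cnot(2) cW(2)] .
    have L3: "card {S. lower W3 S} = card F3" using IH[OF WV(3) TV(2) cnot(3) cW(3)] .
    have eq: "{S. lower V S} = insert T ({S. lower W1 S} \<union> {S. lower W2 S} \<union> {S. lower W3 S})"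
    proof (intro equalityI subsetI)
      fix S assume "S \<in> {S. lower V S}"
      then have LS: "lower V S" by simp
      show "S \<in> insert T ({S. lower W1 S} \<union> {S. lower W2 S} \<union> {S. lower W3 S})"
      proof (cases "S = T")
        case False
        have "S \<subseteq> W1 \<or> S \<subseteq> W2 \<or> S \<subseteq> W3"
        proof (rule ccontr)
          assume nW: "\<not> (S \<subseteq> W1 \<or> S \<subseteq> W2 \<or> S \<subseteq> W3)"
          have "S \<inter> F1 = {}" using sup1[OF less.prems(1) LT T(1) d3(1) LS] nW unfolding W1_def F1_def by blast
          moreover have "S \<inter> F2 = {}" using sup1[OF less.prems(1) LT T2(1) d3(2) LS] nW unfolding W2_def F2_def by blast
          moreover have "S \<inter> F3 = {}" using sup1[OF less.prems(1) LT T2(2) d3(3) LS] nW unfolding W3_def F3_def by blast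
          moreover have "S \<subseteq> V" using LS unfolding lower_def by simp
          ultimately have "S \<subseteq> T" using cover3 by blast
          moreover have "card S = card T" using LS LT unfolding lower_def by simp
          ultimately have "S = T" using card_subset_eq T by (metis finite.emptyI finite.insertI)
          then show False using False by simp
        qed
        then show ?thesis using lower_restrict[OF LS] WV by blast
      qed simp
    next
      fix S assume "S \<in> insert T ({S. lower W1 S} \<union> {S. lower W2 S} \<union> {S. lower W3 S})"
      then consider "S = T" | "lower W1 S" | "lower W2 S" | "lower W3 S" by blast
      then show "S \<in> {S. lower V S}"
      proof cases
        case 1 then show ?thesis using LT by simp
      next
        case 2 then show ?thesis using sub[OF less.prems(1) LT T(1) d3(1)] unfolding W1_def F1_def by simp
      next
        case 3 then show ?thesis using sub[OF less.prems(1) LT T2(1) d3(2)] unfolding W2_def F2_def by simp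
      next
        case 4 then show ?thesis using sub[OF less.prems(1) LT T2(2) d3(3)] unfolding W3_def F3_def by simp
      qed
    qed
    have small: "\<And>S X. lower X S \<Longrightarrow> S \<subseteq> {y} \<Longrightarrow> False" for y
    proof -
      fix S X assume "lower X S" "S \<subseteq> {y}"
      then have "card S \<le> 1" "card S = 3" unfolding lower_def using card_mono[of "{y}" S] by auto
      then show False by simp
    qed
    have aF2: "a \<notin> F2" using FT(2) T by blast
    have cF1: "c \<notin> F1" using FT(1) T by blast
    have bF3: "b \<notin> F3" using FT(3) T by blast
    have W12a: "W1 \<inter> W2 \<subseteq> {b}" unfolding W1_def W2_def using w12_aux[OF F12(1) aF2 cF1] dab by simp
    have W12b: "W2 \<inter> W3 \<subseteq> {c}" unfolding W2_def W3_def using w12_aux[OF F12(2) bF3 aF2] dab by simp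
    have W12c: "W1 \<inter> W3 \<subseteq> {a}" unfolding W1_def W3_def using w12_aux[OF _ cF1 bF3, of a] F12(3) dab
      by (simp add: Int_commute insert_commute)
    note W12 = W12a W12b W12c
    have D12: "{S. lower W1 S} \<inter> {S. lower W2 S} = {}"
    proof (rule ccontr)
      assume "{S. lower W1 S} \<inter> {S. lower W2 S} \<noteq> {}"
      then obtain S where S: "lower W1 S" "lower W2 S" by blast
      then have "S \<subseteq> W1 \<inter> W2" unfolding lower_def by blast
      then show False using small[OF S(1)] W12(1) by blast
    qed
    have D23: "{S. lower W2 S} \<inter> {S. lower W3 S} = {}"
    proof (rule ccontr)
      assume "{S. lower W2 S} \<inter> {S. lower W3 S} \<noteq> {}"
      then obtain S where S: "lower W2 S" "lower W3 S" by blast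
      then have "S \<subseteq> W2 \<inter> W3" unfolding lower_def by blast
      then show False using small[OF S(1)] W12(2) by blast
    qed
    have D13: "{S. lower W1 S} \<inter> {S. lower W3 S} = {}"
    proof (rule ccontr)
      assume "{S. lower W1 S} \<inter> {S. lower W3 S} \<noteq> {}"
      then obtain S where S: "lower W1 S" "lower W3 S" by blast
      then have "S \<subseteq> W1 \<inter> W3" unfolding lower_def by blast
      then show False using small[OF S(1)] W12(3) by blast
    qed
    have Tn: "T \<notin> {S. lower W1 S} \<union> {S. lower W2 S} \<union> {S. lower W3 S}"
      using cnot T unfolding lower_def by auto
    have finW: "finite W1" "finite W2" "finite W3" using WV finV finite_subset by blast+
    have fL: "finite {S. lower W1 S}" "finite {S. lower W2 S}" "finite {S. lower W3 S}"
      using lower_fin finW by auto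
    have f1: "card ({S. lower W1 S} \<union> {S. lower W2 S}) = card {S. lower W1 S} + card {S. lower W2 S}"
      using fL D12 by (intro card_Un_disjoint) auto
    have f2: "card ({S. lower W1 S} \<union> {S. lower W2 S} \<union> {S. lower W3 S}) =
        card ({S. lower W1 S} \<union> {S. lower W2 S}) + card {S. lower W3 S}"
      using fL D13 D23 by (intro card_Un_disjoint) auto
    have "card {S. lower V S} = 1 + card {S. lower W1 S} + card {S. lower W2 S} + card {S. lower W3 S}"
      unfolding eq using Tn fL f1 f2 by (simp add: card_insert_disjoint)
    then show ?thesis using L1 L2 L3 cardV by simp
  qed
qed

end



lemma mod2: "(m::nat) < 2*n \<Longrightarrow> m mod n = (if m < n then m else m - n)"
  by (simp add: mod_if)

lemma sucmod: "k < n \<Longrightarrow> Suc k mod n = (if Suc k < n then Suc k else 0)"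
  using mod2[of "Suc k" n] by auto

lemma sc_inj: "a < n \<Longrightarrow> b < n \<Longrightarrow> Suc a mod n = Suc b mod n \<Longrightarrow> a = b"
  by (simp add: sucmod split: if_splits)

lemma sc1: "k < n \<Longrightarrow> 2 \<le> n \<Longrightarrow> Suc k mod n \<noteq> k"
  by (simp add: sucmod split: if_splits)

lemma sc2: "k < n \<Longrightarrow> 3 \<le> n \<Longrightarrow> Suc (Suc k) mod n \<noteq> k"
  using mod2[of "Suc (Suc k)" n] by auto

lemma sc3: "k < n \<Longrightarrow> 4 \<le> n \<Longrightarrow> Suc (Suc (Suc k)) mod n \<noteq> k"
  using mod2[of "Suc (Suc (Suc k))" n] by auto

definition K :: "nat \<Rightarrow> nat set \<Rightarrow> nat set" where
  "K n T = {k \<in> {0..<n}. k \<in> T \<and> Suc k mod n \<in> T}"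

lemma K_fin: "finite (K n T)" unfolding K_def by simp

lemma neigh_K: assumes n: "4 \<le> n" and T: "T \<in> triples n" and N: "neighboring n T"
  shows "card (K n T) = 2"
proof -
  obtain i where i: "i < n" "T = {i, Suc i mod n, Suc (Suc i) mod n}" using N unfolding neighboring_def by blast
  define j where "j = Suc i mod n"
  define l where "l = Suc (Suc i) mod n"
  have T': "T = {i, j, l}" using i unfolding j_def l_def by simp
  have jn: "j < n" "l < n" unfolding j_def l_def using i by auto
  have lj: "l = Suc j mod n" unfolding l_def j_def by (simp add: mod_Suc_eq)
  have ij: "i \<noteq> j" unfolding j_def using sc1[of i n] i n by simp
  have il: "l \<noteq> i" unfolding l_def using sc2[of i n] i n by simp
  have jl: "l \<noteq> j" unfolding lj using sc1[of j n] jn n by simp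
  have sl: "Suc l mod n \<noteq> i" unfolding l_def using sc3[of i n] i n by (simp add: mod_Suc_eq)
  have sl2: "Suc l mod n \<noteq> j" using sc_inj[of l n "i"] jn i il unfolding j_def by auto
  have sl3: "Suc l mod n \<noteq> l" using sc1[of l n] jn n by simp
  have "K n T = {i, j}"
  proof
    show "K n T \<subseteq> {i,j}"
    proof
      fix k assume "k \<in> K n T"
      then have k: "k \<in> T" "Suc k mod n \<in> T" unfolding K_def by auto
      show "k \<in> {i,j}"
      proof (rule ccontr)
        assume "k \<notin> {i,j}"
        then have "k = l" using k T' by blast
        then show False using k(2) T' sl sl2 sl3 by blast
      qed
    qed
  next
    show "{i,j} \<subseteq> K n T" unfolding K_def using T' i jn lj by auto
  qed
  then show ?thesis using ij by simp
qed

lemma K_ge2: assumes n: "4 \<le> n" and T: "T \<in> triples n" and c: "2 \<le> card (K n T)"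
  shows "neighboring n T"
proof -
  have "\<exists>k k'. k \<in> K n T \<and> k' \<in> K n T \<and> k \<noteq> k'"
  proof -
    obtain k where k: "k \<in> K n T" using c by (metis card.empty ex_in_conv not_numeral_le_zero)
    have "card (K n T - {k}) \<ge> 1" using c k K_fin by simp
    then obtain k' where "k' \<in> K n T - {k}" by (metis card.empty ex_in_conv not_one_le_zero)
    then show ?thesis using k by blast
  qed
  then obtain k k' where kk: "k \<in> K n T" "k' \<in> K n T" "k \<noteq> k'" by blast
  have Tn: "T \<subseteq> {0..<n}" "card T = 3" using T unfolding triples_def by auto
  have fT: "finite T" using Tn by (metis finite_atLeastLessThan finite_subset)
  have kin: "k < n" "k' < n" "k \<in> T" "k' \<in> T" "Suc k mod n \<in> T" "Suc k' mod n \<in> T" using kk unfolding K_def by auto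
  have main: "T = {a, Suc a mod n, Suc (Suc a) mod n}" if a: "a < n" "a \<in> T" "Suc a mod n \<in> T" "Suc (Suc a) mod n \<in> T" for a
  proof -
    have e: "Suc (Suc a) mod n = Suc (Suc a mod n) mod n" by (simp add: mod_Suc_eq)
    have d: "a \<noteq> Suc a mod n" "Suc (Suc a) mod n \<noteq> a" "Suc (Suc a) mod n \<noteq> Suc a mod n"
      using sc1[of a n] sc2[of a n] sc1[of "Suc a mod n" n] a n e by auto
    have "{a, Suc a mod n, Suc (Suc a) mod n} \<subseteq> T" using a by auto
    moreover have "card {a, Suc a mod n, Suc (Suc a) mod n} = 3" using d by auto
    ultimately show ?thesis using card_subset_eq[OF fT] Tn by metis
  qed
  have "k' = Suc k mod n \<or> k = Suc k' mod n"
  proof (rule ccontr)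
    assume h: "\<not> (k' = Suc k mod n \<or> k = Suc k' mod n)"
    have "Suc k mod n \<noteq> Suc k' mod n" using sc_inj kin kk by blast
    moreover have "k \<noteq> Suc k mod n" "k' \<noteq> Suc k' mod n" using sc1[of k n] sc1[of k' n] kin n by auto
    ultimately have "card {k, Suc k mod n, k', Suc k' mod n} = 4" using h kk by auto
    moreover have "{k, Suc k mod n, k', Suc k' mod n} \<subseteq> T" using kin by auto
    ultimately have "4 \<le> card T" using card_mono[OF fT] by metis
    then show False using Tn by simp
  qed
  then obtain a where "a < n" "a \<in> T" "Suc a mod n \<in> T" "Suc (Suc a) mod n \<in> T"
    using kin by (metis mod_Suc_eq)
  then have "T = {a, Suc a mod n, Suc (Suc a) mod n}" using main by blast
  then show ?thesis unfolding neighboring_def using \<open>a < n\<close> by blast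
qed

lemma disj_K: "disjoint_triple n T \<Longrightarrow> K n T = {}"
  unfolding disjoint_triple_def K_def adjacent_def by blast

lemma nondisj_K: assumes "T \<in> triples n" "\<not> disjoint_triple n T" shows "K n T \<noteq> {}"
proof -
  obtain i j where ij: "i \<in> T" "j \<in> T" "adjacent n i j" using assms(2) unfolding disjoint_triple_def by blast
  have "i < n" "j < n" using ij assms(1) unfolding triples_def by auto
  then show ?thesis using ij unfolding adjacent_def K_def by auto
qed

lemma inter_K: assumes n: "4 \<le> n" and T: "T \<in> triples n" and I: "intermediate n T"
  shows "card (K n T) = 1"
proof -
  have "K n T \<noteq> {}" using nondisj_K T I unfolding intermediate_def by blast
  then have "card (K n T) \<ge> 1" using K_fin by (simp add: Suc_leI card_gt_0_iff)
  moreover have "\<not> 2 \<le> card (K n T)" using K_ge2[OF n T] I unfolding intermediate_def by blast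
  ultimately show ?thesis by simp
qed

lemma neigh_not_disj: assumes "neighboring n T" "3 \<le> n" shows "\<not> disjoint_triple n T"
proof -
  obtain i where i: "i < n" "T = {i, Suc i mod n, Suc (Suc i) mod n}" using assms unfolding neighboring_def by blast
  then have "adjacent n i (Suc i mod n)" unfolding adjacent_def by simp
  then show ?thesis using i unfolding disjoint_triple_def by blast
qed


lemma triples_fin: "finite (triples n)"
  unfolding triples_def by (rule finite_subset[of _ "Pow {0..<n}"]) auto

lemma card_filter: "finite A \<Longrightarrow> card {x\<in>A. Q x} = (\<Sum>x\<in>A. if Q x then 1 else 0)"
  by (simp add: sum.If_cases Int_def)

lemma classes:
  assumes n: "4 \<le> n" and c: "card {T \<in> triples n. P T} = n - 2"
    and e: "\<forall>k<n. card {T \<in> triples n. P T \<and> k \<in> T \<and> Suc k mod n \<in> T} = 1"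
  shows "int (card {T \<in> triples n. P T \<and> neighboring n T}) - int (card {T \<in> triples n. P T \<and> disjoint_triple n T}) = 2
     \<and> card {T \<in> triples n. P T \<and> neighboring n T} + card {T \<in> triples n. P T \<and> disjoint_triple n T}
       + card {T \<in> triples n. P T \<and> intermediate n T} = n - 2"
proof -
  define ES where "ES = {T \<in> triples n. P T}"
  define A where "A = {T \<in> triples n. P T \<and> neighboring n T}"
  define B where "B = {T \<in> triples n. P T \<and> disjoint_triple n T}"
  define C where "C = {T \<in> triples n. P T \<and> intermediate n T}"
  have fES: "finite ES" unfolding ES_def using triples_fin by simp
  have fABC: "finite A" "finite B" "finite C" unfolding A_def B_def C_def using triples_fin by simp_all
  have AB: "A \<inter> B = {}" unfolding A_def B_def using neigh_not_disj n by auto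
  have AC: "A \<inter> C = {}" "B \<inter> C = {}" unfolding A_def B_def C_def intermediate_def by auto
  have U: "ES = A \<union> B \<union> C" unfolding ES_def A_def B_def C_def intermediate_def by auto
  have cE: "card ES = card A + card B + card C"
    unfolding U using fABC AB AC by (simp add: card_Un_disjoint Int_Un_distrib2)
  have s1: "(\<Sum>T\<in>ES. card (K n T)) = n"
  proof -
    have "(\<Sum>T\<in>ES. card (K n T)) = (\<Sum>T\<in>ES. \<Sum>k\<in>{0..<n}. if k \<in> T \<and> Suc k mod n \<in> T then 1 else 0)"
      unfolding K_def by (intro sum.cong refl) (rule card_filter, simp)
    also have "\<dots> = (\<Sum>k\<in>{0..<n}. \<Sum>T\<in>ES. if k \<in> T \<and> Suc k mod n \<in> T then 1 else 0)"
      by (rule sum.swap)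
    also have "\<dots> = (\<Sum>k\<in>{0..<n}. 1)"
    proof (intro sum.cong refl)
      fix k assume "k \<in> {0..<n}"
      then have "card {T \<in> ES. k \<in> T \<and> Suc k mod n \<in> T} = 1" using e unfolding ES_def by auto
      then show "(\<Sum>T\<in>ES. if k \<in> T \<and> Suc k mod n \<in> T then 1 else 0) = (1::nat)"
        using card_filter[OF fES, of "\<lambda>T. k \<in> T \<and> Suc k mod n \<in> T"] by simp
    qed
    finally show ?thesis by simp
  qed
  have s2: "(\<Sum>T\<in>ES. card (K n T)) = 2 * card A + card C"
  proof -
    have "(\<Sum>T\<in>ES. card (K n T)) = (\<Sum>T\<in>A. card (K n T)) + (\<Sum>T\<in>B. card (K n T)) + (\<Sum>T\<in>C. card (K n T))"
      unfolding U using fABC AB AC by (simp add: sum.union_disjoint Int_Un_distrib2)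
    also have "(\<Sum>T\<in>A. card (K n T)) = (\<Sum>T\<in>A. 2)"
      by (intro sum.cong refl) (use neigh_K n in \<open>auto simp: A_def\<close>)
    also have "(\<Sum>T\<in>B. card (K n T)) = (\<Sum>T\<in>B. 0)"
      by (intro sum.cong refl) (auto simp: B_def disj_K)
    also have "(\<Sum>T\<in>C. card (K n T)) = (\<Sum>T\<in>C. 1)"
      by (intro sum.cong refl) (use inter_K n in \<open>auto simp: C_def\<close>)
    finally show ?thesis by simp
  qed
  have "2 * card A + card C = n" using s1 s2 by simp
  moreover have "card A + card B + card C = n - 2" using cE c unfolding ES_def by simp
  ultimately show ?thesis unfolding A_def B_def C_def using n by linarith
qed


lemma ccw_all:
  assumes E: "\<forall>i<n. \<forall>j<n. j \<noteq> i \<and> j \<noteq> Suc i mod n \<longrightarrow> orient (p i) (p (Suc i mod n)) (p j) > 0"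
  shows "i < j \<Longrightarrow> j < k \<Longrightarrow> k < n \<Longrightarrow> orient (p i) (p j) (p k) > 0"
proof (induction k arbitrary: j)
  case 0 then show ?case by simp
next
  case (Suc k)
  have E': "orient (p a) (p (Suc a)) (p b) > 0" if "Suc a < n" "b < n" "b \<noteq> a" "b \<noteq> Suc a" for a b
  proof -
    have "Suc a mod n = Suc a" using that by simp
    then show ?thesis using E that by (metis Suc_lessD)
  qed
  show ?case
  proof (cases "j = k")
    case True
    have "orient (p k) (p (Suc k)) (p i) > 0" using E'[of k i] Suc.prems True by auto
    then show ?thesis using True orient_cyc[of "p i" "p k" "p (Suc k)"] by simp
  next
    case False
    then have jk: "j < k" using Suc.prems by simp
    have IH: "orient (p i) (p j) (p k) > 0" using Suc.IH[of j] jk Suc.prems by simp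
    have o1: "orient (p i) (p (Suc i)) (p (Suc k)) > 0" using E'[of i "Suc k"] Suc.prems jk by auto
    have o2: "orient (p i) (p k) (p (Suc k)) > 0"
      using E'[of k i] Suc.prems jk orient_cyc[of "p i" "p k" "p (Suc k)"] by auto
    have o3: "orient (p i) (p (Suc i)) (p j) \<ge> 0"
    proof (cases "j = Suc i")
      case True then show ?thesis by (simp add: orient_def)
    next
      case False then show ?thesis using E'[of i j] Suc.prems jk by auto
    qed
    have o4: "orient (p i) (p (Suc i)) (p k) > 0" using E'[of i k] Suc.prems jk by auto
    have id: "orient (p i) (p j) (p k) * orient (p i) (p (Suc i)) (p (Suc k)) +
       orient (p i) (p k) (p (Suc k)) * orient (p i) (p (Suc i)) (p j) +
       orient (p i) (p (Suc k)) (p j) * orient (p i) (p (Suc i)) (p k) = 0"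
      using turn_id[of "p i" "p j" "p k" "p (Suc i)" "p (Suc k)"] by simp
    have "orient (p i) (p j) (p k) * orient (p i) (p (Suc i)) (p (Suc k)) > 0" using IH o1 by simp
    moreover have "orient (p i) (p k) (p (Suc k)) * orient (p i) (p (Suc i)) (p j) \<ge> 0" using o2 o3 by simp
    ultimately have "orient (p i) (p (Suc k)) (p j) * orient (p i) (p (Suc i)) (p k) < 0" using id by linarith
    then have "orient (p i) (p (Suc k)) (p j) < 0" using o4 by (simp add: mult_less_0_iff)
    then show ?thesis using orient_swap[of "p i" "p (Suc k)" "p j"] by simp
  qed
qed

lemma orient_refl: "orient (fst a, - snd a) (fst b, - snd b) (fst c, - snd c) = - orient a b c"
  by (simp add: orient_def algebra_simps)

definition sq :: "real \<times> real \<Rightarrow> real" where "sq x = (fst x)^2 + (snd x)^2"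

lemma dist_aff: "(dist c x)^2 = sq x - aff (2 * fst c) (2 * snd c) (- sq c) x"
proof -
  have "(dist c x)^2 = (fst c - fst x)^2 + (snd c - snd x)^2"
    by (cases c, cases x) (simp add: dist_Pair_Pair dist_real_def)
  then show ?thesis by (simp add: sq_def aff_def power2_eq_square algebra_simps)
qed

lemma empty_iff: assumes "T \<noteq> {}"
  shows "empty_circle n p T \<longleftrightarrow> (\<exists>\<alpha> \<beta> \<gamma>. (\<forall>i\<in>T. aff \<alpha> \<beta> \<gamma> (p i) = sq (p i)) \<and> (\<forall>m\<in>{0..<n}-T. aff \<alpha> \<beta> \<gamma> (p m) < sq (p m)))"
proof
  assume "empty_circle n p T"
  then obtain c r where cr: "\<forall>i\<in>T. dist c (p i) = r" "\<forall>m\<in>{0..<n} - T. dist c (p m) > r"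
    unfolding empty_circle_def by blast
  obtain i0 where "i0 \<in> T" using assms by blast
  then have r0: "r \<ge> 0" using cr by (metis zero_le_dist)
  let ?a0 = "aff (2 * fst c) (2 * snd c) (- sq c)"
  have e: "\<And>x. aff (2 * fst c) (2 * snd c) (r^2 - sq c) x = ?a0 x + r^2" by (simp add: aff_def)
  have "\<forall>i\<in>T. aff (2 * fst c) (2 * snd c) (r^2 - sq c) (p i) = sq (p i)"
    using cr(1) dist_aff e by (metis add_diff_cancel_left' diff_add_cancel)
  moreover have "\<forall>m\<in>{0..<n}-T. aff (2 * fst c) (2 * snd c) (r^2 - sq c) (p m) < sq (p m)"
  proof
    fix m assume "m \<in> {0..<n} - T"
    then have "dist c (p m) > r" using cr by blast
    then have "r^2 < (dist c (p m))^2" using r0 by (simp add: power_strict_mono)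
    then show "aff (2 * fst c) (2 * snd c) (r^2 - sq c) (p m) < sq (p m)" using dist_aff e by simp
  qed
  ultimately show "\<exists>\<alpha> \<beta> \<gamma>. (\<forall>i\<in>T. aff \<alpha> \<beta> \<gamma> (p i) = sq (p i)) \<and> (\<forall>m\<in>{0..<n}-T. aff \<alpha> \<beta> \<gamma> (p m) < sq (p m))"
    by blast
next
  assume "\<exists>\<alpha> \<beta> \<gamma>. (\<forall>i\<in>T. aff \<alpha> \<beta> \<gamma> (p i) = sq (p i)) \<and> (\<forall>m\<in>{0..<n}-T. aff \<alpha> \<beta> \<gamma> (p m) < sq (p m))"
  then obtain \<alpha> \<beta> \<gamma> where h: "\<forall>i\<in>T. aff \<alpha> \<beta> \<gamma> (p i) = sq (p i)" "\<forall>m\<in>{0..<n}-T. aff \<alpha> \<beta> \<gamma> (p m) < sq (p m)"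
    by blast
  define c where "c = (\<alpha>/2, \<beta>/2)"
  define R where "R = \<gamma> + sq c"
  have e: "\<And>x. aff \<alpha> \<beta> \<gamma> x = aff (2 * fst c) (2 * snd c) (- sq c) x + R" unfolding c_def R_def by (simp add: aff_def)
  have dT: "(dist c (p i))^2 = R" if "i \<in> T" for i
  proof -
    have "aff (2 * fst c) (2 * snd c) (- sq c) (p i) + R = sq (p i)" using h(1) e that by simp
    then show ?thesis using dist_aff[of c "p i"] by linarith
  qed
  obtain i0 where "i0 \<in> T" using assms by blast
  then have R0: "R \<ge> 0" using dT by (metis zero_le_power2)
  have "\<forall>i\<in>T. dist c (p i) = sqrt R" using dT by (metis real_sqrt_unique zero_le_dist)
  moreover have "\<forall>m\<in>{0..<n}-T. dist c (p m) > sqrt R"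
  proof
    fix m assume "m \<in> {0..<n} - T"
    then have "aff \<alpha> \<beta> \<gamma> (p m) < sq (p m)" using h(2) by blast
    then have "R < (dist c (p m))^2" using e[of "p m"] dist_aff[of c "p m"] by linarith
    then have "sqrt R < sqrt ((dist c (p m))^2)" by (simp only: real_sqrt_less_iff)
    then show "dist c (p m) > sqrt R" by simp
  qed
  ultimately show "empty_circle n p T" unfolding empty_circle_def by blast
qed

lemma full_iff: assumes "T \<noteq> {}"
  shows "full_circle n p T \<longleftrightarrow> (\<exists>\<alpha> \<beta> \<gamma>. (\<forall>i\<in>T. aff \<alpha> \<beta> \<gamma> (p i) = - sq (p i)) \<and> (\<forall>m\<in>{0..<n}-T. aff \<alpha> \<beta> \<gamma> (p m) < - sq (p m)))"
proof
  assume "full_circle n p T"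
  then obtain c r where cr: "\<forall>i\<in>T. dist c (p i) = r" "\<forall>m\<in>{0..<n} - T. dist c (p m) < r"
    unfolding full_circle_def by blast
  let ?a0 = "aff (2 * fst c) (2 * snd c) (- sq c)"
  have e: "\<And>x. aff (- (2 * fst c)) (- (2 * snd c)) (sq c - r^2) x = - (?a0 x + r^2)" by (simp add: aff_def)
  have "\<forall>i\<in>T. aff (- (2 * fst c)) (- (2 * snd c)) (sq c - r^2) (p i) = - sq (p i)"
    using cr(1) dist_aff e by (metis add_diff_cancel_left' diff_add_cancel)
  moreover have "\<forall>m\<in>{0..<n}-T. aff (- (2 * fst c)) (- (2 * snd c)) (sq c - r^2) (p m) < - sq (p m)"
  proof
    fix m assume "m \<in> {0..<n} - T"
    then have "dist c (p m) < r" using cr by blast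
    then have "(dist c (p m))^2 < r^2" by (simp add: power_strict_mono)
    then show "aff (- (2 * fst c)) (- (2 * snd c)) (sq c - r^2) (p m) < - sq (p m)" using dist_aff e by simp
  qed
  ultimately show "\<exists>\<alpha> \<beta> \<gamma>. (\<forall>i\<in>T. aff \<alpha> \<beta> \<gamma> (p i) = - sq (p i)) \<and> (\<forall>m\<in>{0..<n}-T. aff \<alpha> \<beta> \<gamma> (p m) < - sq (p m))"
    by blast
next
  assume "\<exists>\<alpha> \<beta> \<gamma>. (\<forall>i\<in>T. aff \<alpha> \<beta> \<gamma> (p i) = - sq (p i)) \<and> (\<forall>m\<in>{0..<n}-T. aff \<alpha> \<beta> \<gamma> (p m) < - sq (p m))"
  then obtain \<alpha> \<beta> \<gamma> where h: "\<forall>i\<in>T. aff \<alpha> \<beta> \<gamma> (p i) = - sq (p i)" "\<forall>m\<in>{0..<n}-T. aff \<alpha> \<beta> \<gamma> (p m) < - sq (p m)"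
    by blast
  define c where "c = (-\<alpha>/2, -\<beta>/2)"
  define R where "R = sq c - \<gamma>"
  have e: "\<And>x. aff \<alpha> \<beta> \<gamma> x = - (aff (2 * fst c) (2 * snd c) (- sq c) x + R)" unfolding c_def R_def by (simp add: aff_def)
  have dT: "(dist c (p i))^2 = R" if "i \<in> T" for i
  proof -
    have "- (aff (2 * fst c) (2 * snd c) (- sq c) (p i) + R) = - sq (p i)" using h(1) e that by simp
    then show ?thesis using dist_aff[of c "p i"] by linarith
  qed
  have "\<forall>i\<in>T. dist c (p i) = sqrt R" using dT by (metis real_sqrt_unique zero_le_dist)
  moreover have "\<forall>m\<in>{0..<n}-T. dist c (p m) < sqrt R"
  proof
    fix m assume "m \<in> {0..<n} - T"
    then have "aff \<alpha> \<beta> \<gamma> (p m) < - sq (p m)" using h(2) by blast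
    then have "(dist c (p m))^2 < R" using e[of "p m"] dist_aff[of c "p m"] by linarith
    then have "sqrt ((dist c (p m))^2) < sqrt R" by (simp only: real_sqrt_less_iff)
    then show "dist c (p m) < sqrt R" by simp
  qed
  ultimately show "full_circle n p T" unfolding full_circle_def by blast
qed

lemma circ_from: assumes "\<forall>x\<in>X. (dist c x)^2 = R" "x \<in> X" "y \<in> X" "x \<noteq> y"
  shows "on_common_circle X"
proof -
  have R0: "R \<ge> 0" using assms(1,2) by (metis zero_le_power2)
  have d: "\<forall>x\<in>X. dist c x = sqrt R" using assms(1) by (metis real_sqrt_unique zero_le_dist)
  have "R \<noteq> 0"
  proof
    assume "R = 0"
    have "dist c x = sqrt R" "dist c y = sqrt R" using d assms(2,3) by auto
    then have "dist c x = 0" "dist c y = 0" using \<open>R = 0\<close> by auto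
    then have "x = c" "y = c" by (metis dist_eq_0_iff)+
    then show False using assms(4) by simp
  qed
  then have "sqrt R > 0" using R0 by simp
  then show ?thesis unfolding on_common_circle_def using d by blast
qed

lemma inj_pts:
  fixes p :: "nat \<Rightarrow> real \<times> real" and i j n :: nat
  assumes ord: "\<forall>i j k. i < j \<longrightarrow> j < k \<longrightarrow> k < n \<longrightarrow> \<sigma> * orient (p i) (p j) (p k) > 0"
    and n: "3 \<le> n" and ij: "i < n" "j < n" "i \<noteq> j"
  shows "p i \<noteq> p j"
proof
  assume eq: "p i = p j"
  have z: "\<And>a b c. a < b \<Longrightarrow> b < c \<Longrightarrow> c < n \<Longrightarrow> orient (p a) (p b) (p c) \<noteq> 0"
    using ord by (metis less_irrefl mult_zero_right)
  obtain k where k: "k < n" "k \<noteq> i" "k \<noteq> j"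
  proof -
    have "\<exists>k\<in>{0,1,2::nat}. k \<noteq> i \<and> k \<noteq> j" by auto
    then obtain k where "k \<in> {0,1,2::nat}" "k \<noteq> i" "k \<noteq> j" by blast
    moreover then have "k < n" using n by auto
    ultimately show ?thesis using that by blast
  qed
  have o0: "\<And>a b. orient a a b = 0" "\<And>a b. orient a b a = 0" "\<And>a b. orient b a a = 0"
    by (simp_all add: orient_def)
  consider "i < j" "j < k" | "i < k" "k < j" | "k < i" "i < j" | "j < i" "i < k" | "j < k" "k < i" | "k < j" "j < i"
    using k ij by linarith
  then show False
  proof cases
    case 1 then show ?thesis using z[of i j k] k eq o0 by simp
  next
    case 2 then show ?thesis using z[of i k j] ij eq o0 by simp
  next
    case 3 then show ?thesis using z[of k i j] ij eq o0 by simp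
  next
    case 4 then show ?thesis using z[of j i k] k eq o0 by simp
  next
    case 5 then show ?thesis using z[of j k i] ij eq o0 by simp
  next
    case 6 then show ?thesis using z[of k j i] ij eq o0 by simp
  qed
qed


lemma aff_circ1: "aff \<alpha> \<beta> \<gamma> x = sq x \<Longrightarrow> (dist (\<alpha>/2, \<beta>/2) x)^2 = \<gamma> + sq (\<alpha>/2, \<beta>/2)"
  using dist_aff[of "(\<alpha>/2, \<beta>/2)" x] by (simp add: aff_def)

lemma aff_circ2: "aff \<alpha> \<beta> \<gamma> x = - sq x \<Longrightarrow> (dist (-\<alpha>/2, -\<beta>/2) x)^2 = sq (-\<alpha>/2, -\<beta>/2) - \<gamma>"
  using dist_aff[of "(-\<alpha>/2, -\<beta>/2)" x] by (simp add: aff_def)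

theorem mainTheorem1:
  fixes n :: nat and p :: "nat \<Rightarrow> real \<times> real"
  assumes "n \<ge> 4"
    and "convex_polygon n p"
    and "no_four_concyclic n p"
  defines "s\<^sub>p \<equiv> card {T \<in> triples n. full_circle n p T \<and> neighboring n T}"
    and "t\<^sub>p \<equiv> card {T \<in> triples n. full_circle n p T \<and> disjoint_triple n T}"
    and "u\<^sub>p \<equiv> card {T \<in> triples n. full_circle n p T \<and> intermediate n T}"
    and "s\<^sub>m \<equiv> card {T \<in> triples n. empty_circle n p T \<and> neighboring n T}"
    and "t\<^sub>m \<equiv> card {T \<in> triples n. empty_circle n p T \<and> disjoint_triple n T}"
    and "u\<^sub>m \<equiv> card {T \<in> triples n. empty_circle n p T \<and> intermediate n T}"
  shows "int s\<^sub>p - int t\<^sub>p = 2 \<and> int s\<^sub>m - int t\<^sub>m = 2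
       \<and> s\<^sub>p + t\<^sub>p + u\<^sub>p = n - 2 \<and> s\<^sub>m + t\<^sub>m + u\<^sub>m = n - 2"
proof -
  have n4: "4 \<le> n" using assms(1) by simp
  have n3: "3 \<le> n" using assms(1) by simp
  have cv: "(\<forall>i<n. \<forall>j<n. j \<noteq> i \<and> j \<noteq> Suc i mod n \<longrightarrow> orient (p i) (p (Suc i mod n)) (p j) > 0) \<or>
      (\<forall>i<n. \<forall>j<n. j \<noteq> i \<and> j \<noteq> Suc i mod n \<longrightarrow> orient (p i) (p (Suc i mod n)) (p j) < 0)"
    using assms(2) unfolding convex_polygon_def by blast
  obtain \<sigma> :: real where sig: "\<sigma> = 1 \<or> \<sigma> = -1"
    and ord\<sigma>: "\<forall>i j k. i < j \<longrightarrow> j < k \<longrightarrow> k < n \<longrightarrow> \<sigma> * orient (p i) (p j) (p k) > 0"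
    and edge\<sigma>: "\<forall>i<n. \<forall>j<n. j \<noteq> i \<and> j \<noteq> Suc i mod n \<longrightarrow> \<sigma> * orient (p i) (p (Suc i mod n)) (p j) > 0"
  proof (cases "\<forall>i<n. \<forall>j<n. j \<noteq> i \<and> j \<noteq> Suc i mod n \<longrightarrow> orient (p i) (p (Suc i mod n)) (p j) > 0")
    case True
    have "\<forall>i j k. i < j \<longrightarrow> j < k \<longrightarrow> k < n \<longrightarrow> 1 * orient (p i) (p j) (p k) > 0"
      using ccw_all[OF True] by simp
    moreover have "\<forall>i<n. \<forall>j<n. j \<noteq> i \<and> j \<noteq> Suc i mod n \<longrightarrow> 1 * orient (p i) (p (Suc i mod n)) (p j) > 0"
      using True by simp
    ultimately show ?thesis using that[of 1] by simp
  next
    case False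
    then have C: "\<forall>i<n. \<forall>j<n. j \<noteq> i \<and> j \<noteq> Suc i mod n \<longrightarrow> orient (p i) (p (Suc i mod n)) (p j) < 0"
      using cv by blast
    define p' where "p' = (\<lambda>m. (fst (p m), - snd (p m)))"
    have op: "\<And>a b c. orient (p' a) (p' b) (p' c) = - orient (p a) (p b) (p c)"
      unfolding p'_def using orient_refl by blast
    have C': "\<forall>i<n. \<forall>j<n. j \<noteq> i \<and> j \<noteq> Suc i mod n \<longrightarrow> orient (p' i) (p' (Suc i mod n)) (p' j) > 0"
      using C op by simp
    have "\<forall>i j k. i < j \<longrightarrow> j < k \<longrightarrow> k < n \<longrightarrow> (-1) * orient (p i) (p j) (p k) > 0"
      using ccw_all[OF C'] op by fastforce
    moreover have "\<forall>i<n. \<forall>j<n. j \<noteq> i \<and> j \<noteq> Suc i mod n \<longrightarrow> (-1) * orient (p i) (p (Suc i mod n)) (p j) > 0"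
      using C by simp
    ultimately show ?thesis using that[of "-1"] by simp
  qed
  have inj: "\<And>i j. i < n \<Longrightarrow> j < n \<Longrightarrow> i \<noteq> j \<Longrightarrow> p i \<noteq> p j" using inj_pts[OF ord\<sigma> n3] by blast
  have ordN: "\<And>i j k. i \<in> {0..<n} \<Longrightarrow> j \<in> {0..<n} \<Longrightarrow> k \<in> {0..<n} \<Longrightarrow> i < j \<Longrightarrow> j < k \<Longrightarrow> \<sigma> * orient (p i) (p j) (p k) > 0"
    using ord\<sigma> by auto
  have nfc: "\<not> on_common_circle {p i, p j, p k, p l}" if "i \<in> {0..<n}" "j \<in> {0..<n}" "k \<in> {0..<n}" "l \<in> {0..<n}" "distinct [i,j,k,l]" for i j k l
    using assms(3) that unfolding no_four_concyclic_def by auto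
  interpret E: cvx p "\<lambda>i. sq (p i)" "{0..<n}" \<sigma>
  proof
    show "\<sigma> = 1 \<or> \<sigma> = -1" by (rule sig)
    show "finite {0..<n}" by simp
    show "\<And>i j k. i \<in> {0..<n} \<Longrightarrow> j \<in> {0..<n} \<Longrightarrow> k \<in> {0..<n} \<Longrightarrow> i < j \<Longrightarrow> j < k \<Longrightarrow> \<sigma> * orient (p i) (p j) (p k) > 0"
      by (rule ordN)
    fix i j k l \<alpha> \<beta> \<gamma>
    assume N: "i \<in> {0..<n}" "j \<in> {0..<n}" "k \<in> {0..<n}" "l \<in> {0..<n}" and d: "distinct [i,j,k,l]"
      and h: "aff \<alpha> \<beta> \<gamma> (p i) = sq (p i)" "aff \<alpha> \<beta> \<gamma> (p j) = sq (p j)" "aff \<alpha> \<beta> \<gamma> (p k) = sq (p k)" "aff \<alpha> \<beta> \<gamma> (p l) = sq (p l)"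
    have "\<forall>x\<in>{p i, p j, p k, p l}. (dist (\<alpha>/2, \<beta>/2) x)^2 = \<gamma> + sq (\<alpha>/2, \<beta>/2)"
      using aff_circ1 h by auto
    moreover have "p i \<noteq> p j" using inj N d by auto
    ultimately have "on_common_circle {p i, p j, p k, p l}" by (intro circ_from) auto
    then show False using nfc N d by blast
  qed
  interpret F: cvx p "\<lambda>i. - sq (p i)" "{0..<n}" \<sigma>
  proof
    show "\<sigma> = 1 \<or> \<sigma> = -1" by (rule sig)
    show "finite {0..<n}" by simp
    show "\<And>i j k. i \<in> {0..<n} \<Longrightarrow> j \<in> {0..<n} \<Longrightarrow> k \<in> {0..<n} \<Longrightarrow> i < j \<Longrightarrow> j < k \<Longrightarrow> \<sigma> * orient (p i) (p j) (p k) > 0"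
      by (rule ordN)
    fix i j k l \<alpha> \<beta> \<gamma>
    assume N: "i \<in> {0..<n}" "j \<in> {0..<n}" "k \<in> {0..<n}" "l \<in> {0..<n}" and d: "distinct [i,j,k,l]"
      and h: "aff \<alpha> \<beta> \<gamma> (p i) = - sq (p i)" "aff \<alpha> \<beta> \<gamma> (p j) = - sq (p j)" "aff \<alpha> \<beta> \<gamma> (p k) = - sq (p k)" "aff \<alpha> \<beta> \<gamma> (p l) = - sq (p l)"
    have "\<forall>x\<in>{p i, p j, p k, p l}. (dist (-\<alpha>/2, -\<beta>/2) x)^2 = sq (-\<alpha>/2, -\<beta>/2) - \<gamma>"
      using aff_circ2 h by auto
    moreover have "p i \<noteq> p j" using inj N d by auto
    ultimately have "on_common_circle {p i, p j, p k, p l}" by (intro circ_from) auto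
    then show False using nfc N d by blast
  qed
  have SE: "{T \<in> triples n. empty_circle n p T} = {T. E.lower {0..<n} T}"
  proof (intro equalityI subsetI)
    fix T assume "T \<in> {T \<in> triples n. empty_circle n p T}"
    then have T: "T \<subseteq> {0..<n}" "card T = 3" "empty_circle n p T" unfolding triples_def by auto
    then have "T \<noteq> {}" by auto
    then show "T \<in> {T. E.lower {0..<n} T}" using T empty_iff[of T n p] unfolding E.lower_def by simp
  next
    fix T assume "T \<in> {T. E.lower {0..<n} T}"
    then have T: "T \<subseteq> {0..<n}" "card T = 3" "E.lower {0..<n} T" unfolding E.lower_def by auto
    then have "T \<noteq> {}" by auto
    then show "T \<in> {T \<in> triples n. empty_circle n p T}" using T empty_iff[of T n p] unfolding E.lower_def triples_def by simp
  qed
  have SF: "{T \<in> triples n. full_circle n p T} = {T. F.lower {0..<n} T}"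
  proof (intro equalityI subsetI)
    fix T assume "T \<in> {T \<in> triples n. full_circle n p T}"
    then have T: "T \<subseteq> {0..<n}" "card T = 3" "full_circle n p T" unfolding triples_def by auto
    then have "T \<noteq> {}" by auto
    then show "T \<in> {T. F.lower {0..<n} T}" using T full_iff[of T n p] unfolding F.lower_def by simp
  next
    fix T assume "T \<in> {T. F.lower {0..<n} T}"
    then have T: "T \<subseteq> {0..<n}" "card T = 3" "F.lower {0..<n} T" unfolding F.lower_def by auto
    then have "T \<noteq> {}" by auto
    then show "T \<in> {T \<in> triples n. full_circle n p T}" using T full_iff[of T n p] unfolding F.lower_def triples_def by simp
  qed
  have cE: "card {T \<in> triples n. empty_circle n p T} = n - 2" unfolding SE using E.count[of "{0..<n}"] n4 by simp
  have cF: "card {T \<in> triples n. full_circle n p T} = n - 2" unfolding SF using F.count[of "{0..<n}"] n4 by simp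
  have side: "\<forall>m\<in>{0..<n}-{k, Suc k mod n}. \<sigma> * orient (p k) (p (Suc k mod n)) (p m) > 0" if "k < n" for k
    using edge\<sigma> that by auto
  have ne: "{0..<n} - {k, Suc k mod n} \<noteq> {}" if "k < n" for k
  proof -
    have sub: "{k, Suc k mod n} \<subseteq> {0..<n}" using that by auto
    have "k \<noteq> Suc k mod n" using sc1[of k n] that n4 by simp
    then have c2: "card {k, Suc k mod n} = 2" by simp
    have "card ({0..<n} - {k, Suc k mod n}) = n - 2"
      using card_Diff_subset[OF _ sub] c2 by simp
    then have "card ({0..<n} - {k, Suc k mod n}) > 0" using n4 by simp
    then show ?thesis by (simp add: card_gt_0_iff)
  qed
  have eE: "\<forall>k<n. card {T \<in> triples n. empty_circle n p T \<and> k \<in> T \<and> Suc k mod n \<in> T} = 1"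
  proof (intro allI impI)
    fix k assume k: "k < n"
    have kj: "k \<noteq> Suc k mod n" using sc1[of k n] k n4 by simp
    have jn: "Suc k mod n \<in> {0..<n}" "k \<in> {0..<n}" using k by auto
    obtain T0 where T0: "E.lower {0..<n} T0" "k \<in> T0" "Suc k mod n \<in> T0"
      using E.edge_ex[of "{0..<n}" k "Suc k mod n" \<sigma>] jn kj ne[OF k] side[OF k] by auto
    have "{T \<in> triples n. empty_circle n p T \<and> k \<in> T \<and> Suc k mod n \<in> T} = {T0}"
    proof (intro equalityI subsetI)
      fix T assume "T \<in> {T \<in> triples n. empty_circle n p T \<and> k \<in> T \<and> Suc k mod n \<in> T}"
      then have "E.lower {0..<n} T" "k \<in> T" "Suc k mod n \<in> T" using SE by auto
      then have "T = T0" using E.edge_uniq[of "{0..<n}" T T0 k "Suc k mod n" \<sigma>] T0 kj side[OF k] by auto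
      then show "T \<in> {T0}" by simp
    next
      fix T assume "T \<in> {T0}"
      then show "T \<in> {T \<in> triples n. empty_circle n p T \<and> k \<in> T \<and> Suc k mod n \<in> T}" using T0 SE by auto
    qed
    then show "card {T \<in> triples n. empty_circle n p T \<and> k \<in> T \<and> Suc k mod n \<in> T} = 1" by simp
  qed
  have eF: "\<forall>k<n. card {T \<in> triples n. full_circle n p T \<and> k \<in> T \<and> Suc k mod n \<in> T} = 1"
  proof (intro allI impI)
    fix k assume k: "k < n"
    have kj: "k \<noteq> Suc k mod n" using sc1[of k n] k n4 by simp
    have jn: "Suc k mod n \<in> {0..<n}" "k \<in> {0..<n}" using k by auto
    obtain T0 where T0: "F.lower {0..<n} T0" "k \<in> T0" "Suc k mod n \<in> T0"
      using F.edge_ex[of "{0..<n}" k "Suc k mod n" \<sigma>] jn kj ne[OF k] side[OF k] by auto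
    have "{T \<in> triples n. full_circle n p T \<and> k \<in> T \<and> Suc k mod n \<in> T} = {T0}"
    proof (intro equalityI subsetI)
      fix T assume "T \<in> {T \<in> triples n. full_circle n p T \<and> k \<in> T \<and> Suc k mod n \<in> T}"
      then have "F.lower {0..<n} T" "k \<in> T" "Suc k mod n \<in> T" using SF by auto
      then have "T = T0" using F.edge_uniq[of "{0..<n}" T T0 k "Suc k mod n" \<sigma>] T0 kj side[OF k] by auto
      then show "T \<in> {T0}" by simp
    next
      fix T assume "T \<in> {T0}"
      then show "T \<in> {T \<in> triples n. full_circle n p T \<and> k \<in> T \<and> Suc k mod n \<in> T}" using T0 SF by auto
    qed
    then show "card {T \<in> triples n. full_circle n p T \<and> k \<in> T \<and> Suc k mod n \<in> T} = 1" by simp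
  qed
  have RE: "int s\<^sub>m - int t\<^sub>m = 2 \<and> s\<^sub>m + t\<^sub>m + u\<^sub>m = n - 2"
    using classes[OF n4, of "empty_circle n p"] cE eE unfolding assms(7-9) by blast
  have RF: "int s\<^sub>p - int t\<^sub>p = 2 \<and> s\<^sub>p + t\<^sub>p + u\<^sub>p = n - 2"
    using classes[OF n4, of "full_circle n p"] cF eF unfolding assms(4-6) by blast
  show ?thesis using RE RF by blast
qed

end
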